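(* Let $h>0$, $N\ge1$, $\delta_0\in(0,h/2)$, and let $\tilde A_1,\dots,\tilde A_N$ be nonzero constants. Define $\tilde\theta_i^{+}(x,y)=\tilde A_i\dfrac{\cosh(i(h-y))}{\sinh(ih)}\cos(ix)$ and $\tilde\theta_i^{-}(x,y)=\tilde A_i\dfrac{\cosh(i(h-y))}{\sinh(ih)}\sin(ix)$. Given vectors $f^+=(f_1^+,\dots,f_N^+)$ and $f^-=(f_1^-,\dots,f_N^-)$, there exists a smooth $2\pi$-periodic in $x$ function $\eta_1(x,y)$ with support in $\{(x,y):x\in\mathbb R,\ \delta_0<y<h\}$ such that $\langle\tilde\theta_i^{\pm},\eta_1\rangle=f_i^{\pm}$ for $i=1,\dots,N$.
   Context: $\langle u,v\rangle=\int_0^h\int_0^{2\pi}u(x,y)v(x,y)\,dx\,dy$. *)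

theory Defs
  imports "HOL-Analysis.Analysis"
begin

primrec Ck2 :: "nat \<Rightarrow> (real \<times> real \<Rightarrow> real) \<Rightarrow> bool" where
  "Ck2 0 f = continuous_on UNIV f"
| "Ck2 (Suc k) f = (\<exists>fx fy. (\<forall>p. (f has_derivative (\<lambda>(u, v). fx p * u + fy p * v)) (at p))
                         \<and> Ck2 k fx \<and> Ck2 k fy)"

definition smooth2 :: "(real \<times> real \<Rightarrow> real) \<Rightarrow> bool" where
  "smooth2 f \<longleftrightarrow> (\<forall>k. Ck2 k f)"

definition ip :: "real \<Rightarrow> (real \<times> real \<Rightarrow> real) \<Rightarrow> (real \<times> real \<Rightarrow> real) \<Rightarrow> real" where
  "ip h u v = integral {0..h} (\<lambda>y. integral {0..2*pi} (\<lambda>x. u (x, y) * v (x, y)))"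

definition theta_plus :: "(nat \<Rightarrow> real) \<Rightarrow> real \<Rightarrow> nat \<Rightarrow> real \<times> real \<Rightarrow> real" where
  "theta_plus A h i = (\<lambda>(x, y). A i * cosh (real i * (h - y)) / sinh (real i * h) * cos (real i * x))"

definition theta_minus :: "(nat \<Rightarrow> real) \<Rightarrow> real \<Rightarrow> nat \<Rightarrow> real \<times> real \<Rightarrow> real" where
  "theta_minus A h i = (\<lambda>(x, y). A i * cosh (real i * (h - y)) / sinh (real i * h) * sin (real i * x))"

end

theory Submission
  imports Defs "HOL-Computational_Algebra.Polynomial"
begin



definition smooth1 :: "(real \<Rightarrow> real) \<Rightarrow> bool" where
  "smooth1 u \<longleftrightarrow> (\<exists>D. D 0 = u \<and> (\<forall>n x. (D n has_real_derivative D (Suc n) x) (at x)))"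

lemma smooth1_deriv:
  assumes "smooth1 u"
  shows "\<exists>u'. (\<forall>x. (u has_real_derivative u' x) (at x)) \<and> smooth1 u'"
proof -
  obtain D where D: "D 0 = u" "\<And>n x. (D n has_real_derivative D (Suc n) x) (at x)"
    using assms unfolding smooth1_def by blast
  show ?thesis
    apply (rule exI[of _ "D 1"])
    using D unfolding smooth1_def
    by (auto intro!: exI[of _ "\<lambda>n. D (Suc n)"])
qed

lemma smooth1_cont: "smooth1 u \<Longrightarrow> isCont u x"
  using smooth1_deriv DERIV_isCont by blast

lemma smooth1_add: "smooth1 u \<Longrightarrow> smooth1 v \<Longrightarrow> smooth1 (\<lambda>x. u x + v x)"
  unfolding smooth1_def
proof (elim exE conjE)
  fix D E assume "D 0 = u" "\<forall>n x. (D n has_real_derivative D (Suc n) x) (at x)"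
    "E 0 = v" "\<forall>n x. (E n has_real_derivative E (Suc n) x) (at x)"
  then show "\<exists>F. F 0 = (\<lambda>x. u x + v x) \<and> (\<forall>n x. (F n has_real_derivative F (Suc n) x) (at x))"
    by (intro exI[of _ "\<lambda>n x. D n x + E n x"]) (auto intro!: derivative_eq_intros)
qed

lemma smooth1_cmult: "smooth1 u \<Longrightarrow> smooth1 (\<lambda>x. c * u x)"
  unfolding smooth1_def
proof (elim exE conjE)
  fix D assume "D 0 = u" "\<forall>n x. (D n has_real_derivative D (Suc n) x) (at x)"
  then show "\<exists>F. F 0 = (\<lambda>x. c * u x) \<and> (\<forall>n x. (F n has_real_derivative F (Suc n) x) (at x))"
    by (intro exI[of _ "\<lambda>n x. c * D n x"]) (auto intro!: derivative_eq_intros)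
qed

lemma smooth1_const: "smooth1 (\<lambda>x. c)"
  unfolding smooth1_def
  by (intro exI[of _ "\<lambda>n x. if n = 0 then c else 0"]) (auto intro!: derivative_eq_intros)

lemma smooth1_sum: "finite S \<Longrightarrow> (\<And>j. j \<in> S \<Longrightarrow> smooth1 (f j)) \<Longrightarrow> smooth1 (\<lambda>x. \<Sum>j\<in>S. f j x)"
  by (induction S rule: finite_induct) (auto intro: smooth1_add smooth1_const)

lemma smooth1_affine: "smooth1 u \<Longrightarrow> smooth1 (\<lambda>x. u (s * x + t))"
  unfolding smooth1_def
proof (elim exE conjE)
  fix D assume D: "D 0 = u" "\<forall>n x. (D n has_real_derivative D (Suc n) x) (at x)"
  show "\<exists>F. F 0 = (\<lambda>x. u (s * x + t)) \<and> (\<forall>n x. (F n has_real_derivative F (Suc n) x) (at x))"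
  proof (intro exI[of _ "\<lambda>n x. s ^ n * D n (s * x + t)"] conjI allI)
    fix n x
    have "((\<lambda>x. D n (s * x + t)) has_real_derivative D (Suc n) (s * x + t) * s) (at x)"
      using D(2) by (auto intro!: derivative_eq_intros DERIV_chain2[where f="D n"])
    then show "((\<lambda>x. s ^ n * D n (s * x + t)) has_real_derivative s ^ Suc n * D (Suc n) (s * x + t)) (at x)"
      by (auto intro!: derivative_eq_intros)
  qed (use D in auto)
qed

lemma smooth1_cos: "smooth1 (\<lambda>x. cos (c * x + d))"
  unfolding smooth1_def
proof (intro exI[of _ "\<lambda>n x. c ^ n * cos (c * x + d + real n * (pi/2))"] conjI allI)
  fix n x
  have e: "c * x + d + real (Suc n) * (pi/2) = (c * x + d + real n * (pi/2)) + pi/2"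
    by (simp add: algebra_simps)
  have "cos (c * x + d + real (Suc n) * (pi/2)) = - sin (c * x + d + real n * (pi/2))"
    unfolding e cos_add by simp
  then show "((\<lambda>x. c ^ n * cos (c * x + d + real n * (pi / 2))) has_real_derivative
           c ^ Suc n * cos (c * x + d + real (Suc n) * (pi / 2))) (at x)"
    by (auto intro!: derivative_eq_intros)
qed auto

lemma polyexp_lim: "((\<lambda>s. poly q s * exp (- s)) \<longlongrightarrow> (0::real)) at_top"
proof -
  have "((\<lambda>s. \<Sum>i\<le>degree q. coeff q i * (s ^ i / exp s)) \<longlongrightarrow> (0::real)) at_top"
    by (intro tendsto_null_sum tendsto_mult_right_zero tendsto_power_div_exp_0)
  moreover have "poly q s * exp (- s) = (\<Sum>i\<le>degree q. coeff q i * (s ^ i / exp s))" for s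
    unfolding poly_altdef sum_divide_distrib[symmetric] by (simp add: exp_minus divide_inverse sum_distrib_right mult.assoc)
  ultimately show ?thesis by simp
qed

definition psi :: "real \<Rightarrow> real" where
  "psi t = (if t \<le> 0 then 0 else exp (- 1 / t))"

fun P :: "nat \<Rightarrow> real poly" where
  "P 0 = 1"
| "P (Suc n) = [:0, 0, 1:] * (P n - pderiv (P n))"

definition Dp :: "nat \<Rightarrow> real \<Rightarrow> real" where
  "Dp n t = (if t \<le> 0 then 0 else poly (P n) (1 / t) * exp (- 1 / t))"

lemma Dp_pos_deriv:
  assumes "t > 0"
  shows "((\<lambda>t. poly p (1 / t) * exp (- 1 / t)) has_real_derivative
          poly ([:0, 0, 1:] * (p - pderiv p)) (1 / t) * exp (- 1 / t)) (at t)"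
proof -
  have "((\<lambda>t. poly p (1 / t) * exp (- 1 / t)) has_real_derivative
          poly (pderiv p) (1 / t) * (- 1 / t^2) * exp (- 1 / t) + poly p (1/t) * (exp (- 1 / t) * (1 / t^2))) (at t)"
    using assms
    by (auto intro!: derivative_eq_intros DERIV_chain2[where f="poly p"] simp: power2_eq_square field_simps)
  then show ?thesis
    using assms by (simp add: field_simps power2_eq_square poly_pCons)
qed

lemma Dp_deriv: "(Dp n has_real_derivative Dp (Suc n) t) (at t)"
proof (cases "t > 0")
  case True
  show ?thesis
  proof (rule has_field_derivative_transform_within_open[of "\<lambda>t. poly (P n) (1 / t) * exp (- 1 / t)" _ _ "{0<..}"])
    show "((\<lambda>t. poly (P n) (1 / t) * exp (- 1 / t)) has_real_derivative Dp (Suc n) t) (at t)"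
      using Dp_pos_deriv[OF True, of "P n"] True by (simp add: Dp_def)
  qed (use True in \<open>auto simp: Dp_def\<close>)
next
  case False
  show ?thesis
  proof (cases "t < 0")
    case True
    show ?thesis
    proof (rule has_field_derivative_transform_within_open[of "\<lambda>t. 0" _ _ "{..<0}"])
      show "((\<lambda>t. 0) has_real_derivative Dp (Suc n) t) (at t)"
        using True by (simp add: Dp_def)
    qed (use True in \<open>auto simp: Dp_def\<close>)
  next
    case False
    with \<open>\<not> t > 0\<close> have t0: "t = 0" by simp
    have R: "((\<lambda>x. Dp n x / x) \<longlongrightarrow> 0) (at_right 0)"
    proof -
      have "((\<lambda>s. poly (pCons 0 (P n)) s * exp (- s)) \<longlongrightarrow> (0::real)) at_top"
        by (rule polyexp_lim)
      then have "((\<lambda>s. Dp n (inverse s) / inverse s) \<longlongrightarrow> (0::real)) at_top"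
      proof (rule Lim_transform_eventually)
        show "\<forall>\<^sub>F s in at_top. poly (pCons 0 (P n)) s * exp (- s) = Dp n (inverse s) / inverse s"
          using eventually_gt_at_top[of 0]
          by eventually_elim (auto simp: Dp_def field_simps)
      qed
      then show ?thesis
        by (simp add: filterlim_at_right_to_top)
    qed
    have L: "((\<lambda>x. Dp n x / x) \<longlongrightarrow> 0) (at_left 0)"
    proof (rule Lim_transform_eventually[OF tendsto_const])
      show "\<forall>\<^sub>F x in at_left 0. 0 = Dp n x / x"
        by (auto simp: eventually_at_left_field Dp_def intro: exI[of _ "-1"])
    qed
    have "((\<lambda>x. Dp n x / x) \<longlongrightarrow> 0) (at 0)"
      using L R by (rule filterlim_split_at)
    then show ?thesis
      unfolding t0 DERIV_def by (simp add: Dp_def)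
  qed
qed

lemma smooth1_psi: "smooth1 psi"
  unfolding smooth1_def
  by (intro exI[of _ Dp] conjI allI Dp_deriv) (auto simp: Dp_def psi_def fun_eq_iff)

lemma psi_nonneg: "psi t \<ge> 0" and psi_pos: "t > 0 \<Longrightarrow> psi t > 0"
  by (auto simp: psi_def)


lemma Ck2_add: "Ck2 k f \<Longrightarrow> Ck2 k g \<Longrightarrow> Ck2 k (\<lambda>p. f p + g p)"
proof (induction k arbitrary: f g)
  case 0
  then show ?case by (auto intro: continuous_on_add)
next
  case (Suc k)
  from Suc.prems obtain fx fy gx gy where
    f: "\<forall>p. (f has_derivative (\<lambda>(u, v). fx p * u + fy p * v)) (at p)" "Ck2 k fx" "Ck2 k fy" and
    g: "\<forall>p. (g has_derivative (\<lambda>(u, v). gx p * u + gy p * v)) (at p)" "Ck2 k gx" "Ck2 k gy"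
    unfolding Ck2.simps by blast
  have D: "((\<lambda>p. f p + g p) has_derivative (\<lambda>(u, v). (fx p + gx p) * u + (fy p + gy p) * v)) (at p)" for p
  proof -
    have "((\<lambda>p. f p + g p) has_derivative (\<lambda>h. (\<lambda>(u, v). fx p * u + fy p * v) h + (\<lambda>(u, v). gx p * u + gy p * v) h)) (at p)"
      using f(1)[rule_format, of p] g(1)[rule_format, of p] by (rule has_derivative_add)
    moreover have "(\<lambda>h. (\<lambda>(u, v). fx p * u + fy p * v) h + (\<lambda>(u, v). gx p * u + gy p * v) h)
       = (\<lambda>(u, v). (fx p + gx p) * u + (fy p + gy p) * v)"
      by (simp add: fun_eq_iff case_prod_beta distrib_right)
    ultimately show ?thesis by simp
  qed
  have "Ck2 k (\<lambda>p. fx p + gx p)" using Suc.IH f(2) g(2) by blast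
  moreover have "Ck2 k (\<lambda>p. fy p + gy p)" using Suc.IH f(3) g(3) by blast
  ultimately show ?case unfolding Ck2.simps
    by (intro exI[of _ "\<lambda>p. fx p + gx p"] exI[of _ "\<lambda>p. fy p + gy p"] conjI allI D)
qed

lemma Ck2_prod3:
  "smooth1 u \<Longrightarrow> smooth1 v \<Longrightarrow> smooth1 w \<Longrightarrow> Ck2 k (\<lambda>(x, y). u x * v y * w y)"
proof (induction k arbitrary: u v w)
  case 0
  have "isCont (\<lambda>p. u (fst p) * v (snd p) * w (snd p)) p" for p
  proof -
    have a: "isCont (\<lambda>p. u (fst p)) p"
      by (rule isCont_o2[where f=fst, OF _ smooth1_cont[OF "0.prems"(1)]]) (intro continuous_intros)
    have b: "isCont (\<lambda>p. v (snd p)) p"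
      by (rule isCont_o2[where f=snd, OF _ smooth1_cont[OF "0.prems"(2)]]) (intro continuous_intros)
    have c: "isCont (\<lambda>p. w (snd p)) p"
      by (rule isCont_o2[where f=snd, OF _ smooth1_cont[OF "0.prems"(3)]]) (intro continuous_intros)
    show ?thesis by (intro continuous_mult a b c)
  qed
  then show ?case
    by (auto simp: case_prod_beta intro!: continuous_at_imp_continuous_on)
next
  case (Suc k)
  obtain u' where u': "\<forall>x. (u has_real_derivative u' x) (at x)" "smooth1 u'"
    using smooth1_deriv[OF Suc.prems(1)] by blast
  obtain v' where v': "\<forall>x. (v has_real_derivative v' x) (at x)" "smooth1 v'"
    using smooth1_deriv[OF Suc.prems(2)] by blast
  obtain w' where w': "\<forall>x. (w has_real_derivative w' x) (at x)" "smooth1 w'"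
    using smooth1_deriv[OF Suc.prems(3)] by blast
  have D: "((\<lambda>(x, y). u x * v y * w y) has_derivative
         (\<lambda>(s, t). (\<lambda>(x, y). u' x * v y * w y) p * s +
            (\<lambda>p. (\<lambda>(x, y). u x * v' y * w y) p + (\<lambda>(x, y). u x * v y * w' y) p) p * t)) (at p)" for p
  proof -
    obtain x y where p: "p = (x, y)" by (cases p)
    have du0: "(u has_derivative (*) (u' x)) (at (fst p))" using u'(1) p unfolding has_field_derivative_def by simp
    have du: "((\<lambda>p. u (fst p)) has_derivative (\<lambda>h. u' x * fst h)) (at p)"
      using has_derivative_compose[OF has_derivative_fst[OF has_derivative_ident] du0] by (simp add: o_def)
    have dv0: "(v has_derivative (*) (v' y)) (at (snd p))" using v'(1) p unfolding has_field_derivative_def by simp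
    have dv: "((\<lambda>p. v (snd p)) has_derivative (\<lambda>h. v' y * snd h)) (at p)"
      using has_derivative_compose[OF has_derivative_snd[OF has_derivative_ident] dv0] by (simp add: o_def)
    have dw0: "(w has_derivative (*) (w' y)) (at (snd p))" using w'(1) p unfolding has_field_derivative_def by simp
    have dw: "((\<lambda>p. w (snd p)) has_derivative (\<lambda>h. w' y * snd h)) (at p)"
      using has_derivative_compose[OF has_derivative_snd[OF has_derivative_ident] dw0] by (simp add: o_def)
    have "((\<lambda>p. u (fst p) * v (snd p) * w (snd p)) has_derivative
       (\<lambda>h. u (fst p) * v (snd p) * (w' y * snd h) + (u (fst p) * (v' y * snd h) + u' x * fst h * v (snd p)) * w (snd p))) (at p)"
      by (intro has_derivative_mult du dv dw)
    moreover have "(\<lambda>h. u (fst p) * v (snd p) * (w' y * snd h) + (u (fst p) * (v' y * snd h) + u' x * fst h * v (snd p)) * w (snd p))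
      = (\<lambda>(s, t). (\<lambda>(x, y). u' x * v y * w y) p * s +
            (\<lambda>p. (\<lambda>(x, y). u x * v' y * w y) p + (\<lambda>(x, y). u x * v y * w' y) p) p * t)"
      by (simp add: fun_eq_iff p case_prod_beta algebra_simps)
    moreover have "(\<lambda>p. u (fst p) * v (snd p) * w (snd p)) = (\<lambda>(x, y). u x * v y * w y)"
      by (simp add: fun_eq_iff)
    ultimately show ?thesis by simp
  qed
  have C1: "Ck2 k (\<lambda>(x, y). u' x * v y * w y)" by (rule Suc.IH[OF u'(2) Suc.prems(2) Suc.prems(3)])
  have C2: "Ck2 k (\<lambda>p. (\<lambda>(x, y). u x * v' y * w y) p + (\<lambda>(x, y). u x * v y * w' y) p)"
    by (intro Ck2_add Suc.IH[OF Suc.prems(1) v'(2) Suc.prems(3)] Suc.IH[OF Suc.prems(1) Suc.prems(2) w'(2)])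
  show ?case unfolding Ck2.simps
    by (intro exI[of _ "\<lambda>(x, y). u' x * v y * w y"]
        exI[of _ "\<lambda>p. (\<lambda>(x, y). u x * v' y * w y) p + (\<lambda>(x, y). u x * v y * w' y) p"] conjI allI D C1 C2)
qed

lemma ftc: "a \<le> b \<Longrightarrow> (\<And>x. (F has_real_derivative f x) (at x)) \<Longrightarrow> (f has_integral F b - F a) {a..b}"
  by (intro fundamental_theorem_of_calculus)
     (auto simp: has_real_derivative_iff_has_vector_derivative[symmetric] intro: has_field_derivative_at_within)

lemma s2: "sin (real k * (2 * pi)) = 0" and c2: "cos (real k * (2 * pi)) = 1"
proof -
  have e: "real k * (2 * pi) = 2 * real k * pi" by simp
  show "sin (real k * (2 * pi)) = 0" "cos (real k * (2 * pi)) = 1" unfolding e by simp_all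
qed

lemma int_cc:
  assumes "i \<ge> 1" "j \<ge> 1"
  shows "((\<lambda>x. cos (real i * x) * cos (real j * x)) has_integral (if i = j then pi else 0)) {0..2*pi}"
proof (cases "i = j")
  case True
  have "((\<lambda>x. cos (real i * x) * cos (real j * x)) has_integral
    ((\<lambda>x. x / 2 + sin (real (2*i) * x) / (4 * real i)) (2*pi) - (\<lambda>x. x / 2 + sin (real (2*i) * x) / (4 * real i)) 0)) {0..2*pi}"
  proof (rule ftc)
    fix x
    have e: "real (2*i) * x = 2 * (real i * x)" by simp
    have q: "cos (real i * x) * cos (real j * x) = 1/2 + cos (real (2*i) * x) / 2"
      using True unfolding e cos_double_cos by (simp add: power2_eq_square field_simps)
    have "((\<lambda>x. x / 2 + sin (real (2*i) * x) / (4 * real i)) has_real_derivative 1/2 + cos (real (2*i) * x) / 2) (at x)"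
      using assms by (auto intro!: derivative_eq_intros simp: field_simps)
    then show "((\<lambda>x. x / 2 + sin (real (2*i) * x) / (4 * real i)) has_real_derivative cos (real i * x) * cos (real j * x)) (at x)"
      unfolding q .
  qed simp
  then show ?thesis using True s2[of "2*i"] by simp
next
  case False
  have d: "real i ^ 2 - real j ^ 2 \<noteq> 0"
    using False assms by (auto simp: power2_eq_iff)
  let ?F = "\<lambda>x. inverse (real i ^ 2 - real j ^ 2) * (real i * sin (real i * x) * cos (real j * x) - real j * cos (real i * x) * sin (real j * x))"
  have "((\<lambda>x. cos (real i * x) * cos (real j * x)) has_integral (?F (2*pi) - ?F 0)) {0..2*pi}"
  proof (rule ftc)
    fix x
    have "(?F has_real_derivative inverse (real i ^ 2 - real j ^ 2) * ((real i ^ 2 - real j ^ 2) * (cos (real i * x) * cos (real j * x)))) (at x)"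
      by (auto intro!: derivative_eq_intros simp: algebra_simps power2_eq_square)
    then show "(?F has_real_derivative cos (real i * x) * cos (real j * x)) (at x)"
      unfolding mult.assoc[symmetric] left_inverse[OF d] mult_1_left .
  qed simp
  then show ?thesis using False by (simp add: s2)
qed

lemma int_cs:
  assumes "i \<ge> 1" "j \<ge> 1"
  shows "((\<lambda>x. cos (real i * x) * sin (real j * x)) has_integral 0) {0..2*pi}"
proof (cases "i = j")
  case True
  let ?F = "\<lambda>x. - cos (real (2*i) * x) / (4 * real i)"
  have "((\<lambda>x. cos (real i * x) * sin (real j * x)) has_integral (?F (2*pi) - ?F 0)) {0..2*pi}"
  proof (rule ftc)
    fix x
    have "cos (real i * x) * sin (real j * x) = sin (real (2*i) * x) / 2"
      using True sin_double[of "real i * x"] by (simp add: algebra_simps)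
    then show "(?F has_real_derivative cos (real i * x) * sin (real j * x)) (at x)"
      using assms by (auto intro!: derivative_eq_intros simp: field_simps)
  qed simp
  then show ?thesis using True c2[of "2*i"] by simp
next
  case False
  have d: "real i ^ 2 - real j ^ 2 \<noteq> 0"
    using False assms by (auto simp: power2_eq_iff)
  let ?F = "\<lambda>x. inverse (real i ^ 2 - real j ^ 2) * (real i * sin (real i * x) * sin (real j * x) + real j * cos (real i * x) * cos (real j * x))"
  have "((\<lambda>x. cos (real i * x) * sin (real j * x)) has_integral (?F (2*pi) - ?F 0)) {0..2*pi}"
  proof (rule ftc)
    fix x
    have "(?F has_real_derivative inverse (real i ^ 2 - real j ^ 2) * ((real i ^ 2 - real j ^ 2) * (cos (real i * x) * sin (real j * x)))) (at x)"
      by (auto intro!: derivative_eq_intros simp: algebra_simps power2_eq_square)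
    then show "(?F has_real_derivative cos (real i * x) * sin (real j * x)) (at x)"
      unfolding mult.assoc[symmetric] left_inverse[OF d] mult_1_left .
  qed simp
  then show ?thesis using False by (simp add: s2 c2)
qed

lemma int_ss:
  assumes "i \<ge> 1" "j \<ge> 1"
  shows "((\<lambda>x. sin (real i * x) * sin (real j * x)) has_integral (if i = j then pi else 0)) {0..2*pi}"
proof (cases "i = j")
  case True
  have "((\<lambda>x. sin (real i * x) * sin (real j * x)) has_integral
    ((\<lambda>x. x / 2 - sin (real (2*i) * x) / (4 * real i)) (2*pi) - (\<lambda>x. x / 2 - sin (real (2*i) * x) / (4 * real i)) 0)) {0..2*pi}"
  proof (rule ftc)
    fix x
    have e: "real (2*i) * x = 2 * (real i * x)" by simp
    have q: "sin (real i * x) * sin (real j * x) = 1/2 - cos (real (2*i) * x) / 2"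
      using True unfolding e cos_double_sin by (simp add: power2_eq_square field_simps)
    have "((\<lambda>x. x / 2 - sin (real (2*i) * x) / (4 * real i)) has_real_derivative 1/2 - cos (real (2*i) * x) / 2) (at x)"
      using assms by (auto intro!: derivative_eq_intros simp: field_simps)
    then show "((\<lambda>x. x / 2 - sin (real (2*i) * x) / (4 * real i)) has_real_derivative sin (real i * x) * sin (real j * x)) (at x)"
      unfolding q .
  qed simp
  then show ?thesis using True s2[of "2*i"] by simp
next
  case False
  have d: "real i ^ 2 - real j ^ 2 \<noteq> 0"
    using False assms by (auto simp: power2_eq_iff)
  let ?F = "\<lambda>x. inverse (real i ^ 2 - real j ^ 2) * (real j * sin (real i * x) * cos (real j * x) - real i * cos (real i * x) * sin (real j * x))"
  have "((\<lambda>x. sin (real i * x) * sin (real j * x)) has_integral (?F (2*pi) - ?F 0)) {0..2*pi}"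
  proof (rule ftc)
    fix x
    have "(?F has_real_derivative inverse (real i ^ 2 - real j ^ 2) * ((real i ^ 2 - real j ^ 2) * (sin (real i * x) * sin (real j * x)))) (at x)"
      by (auto intro!: derivative_eq_intros simp: algebra_simps power2_eq_square)
    then show "(?F has_real_derivative sin (real i * x) * sin (real j * x)) (at x)"
      unfolding mult.assoc[symmetric] left_inverse[OF d] mult_1_left .
  qed simp
  then show ?thesis using False by (simp add: s2)
qed




lemma cos_shift: "cos (c * x + - (pi / 2)) = sin (c * x)"
  unfolding cos_add by simp

lemma smooth1_trig: "smooth1 (\<lambda>x. \<Sum>j\<in>S. a j * cos (real j * x) + b j * sin (real j * x))"
proof -
  have "finite S \<Longrightarrow> ?thesis"
  proof (rule smooth1_sum)
    fix j
    have c: "smooth1 (\<lambda>x. cos (real j * x))" using smooth1_cos[of "real j" 0] by simp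
    have s: "smooth1 (\<lambda>x. sin (real j * x))" using smooth1_cos[of "real j" "- (pi/2)"] by (simp only: cos_shift)
    show "smooth1 (\<lambda>x. a j * cos (real j * x) + b j * sin (real j * x))"
      by (intro smooth1_add smooth1_cmult c s)
  qed
  moreover have "infinite S \<Longrightarrow> ?thesis" by (simp add: smooth1_const)
  ultimately show ?thesis by blast
qed

lemma isCont_psi: "isCont psi x"
  by (rule smooth1_cont[OF smooth1_psi])

lemma cancel_lem: "(A::real) \<noteq> 0 \<Longrightarrow> s \<noteq> 0 \<Longrightarrow> c \<noteq> 0 \<Longrightarrow> A / s * c * (f * s / (A * pi * c) * pi) = f"
  by (simp add: field_simps)

theorem lemma9p2:
  fixes h \<delta>0 :: real and N :: nat and A fp fm :: "nat \<Rightarrow> real"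
  assumes "h > 0" and "N \<ge> 1" and "0 < \<delta>0" and "\<delta>0 < h / 2"
    and "\<And>i. i \<in> {1..N} \<Longrightarrow> A i \<noteq> 0"
  shows "\<exists>\<eta> :: real \<times> real \<Rightarrow> real.
           smooth2 \<eta>
         \<and> (\<forall>x y. \<eta> (x + 2 * pi, y) = \<eta> (x, y))
         \<and> closure {p. \<eta> p \<noteq> 0} \<subseteq> {p. \<delta>0 < snd p \<and> snd p < h}
         \<and> (\<forall>i\<in>{1..N}. ip h (theta_plus A h i) \<eta> = fp i
                       \<and> ip h (theta_minus A h i) \<eta> = fm i)"
proof -
  define phi where "phi y = psi (y - h/2) * psi (3*h/4 - y)" for y
  define c where "c i = integral {0..h} (\<lambda>y. cosh (real i * (h - y)) * phi y)" for i :: nat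
  define a where "a j = fp j * sinh (real j * h) / (A j * pi * c j)" for j
  define b where "b j = fm j * sinh (real j * h) / (A j * pi * c j)" for j
  define g where "g x = (\<Sum>j\<in>{1..N}. a j * cos (real j * x) + b j * sin (real j * x))" for x
  define \<eta> where "\<eta> = (\<lambda>(x, y). g x * psi (y - h/2) * psi (3*h/4 - y))"
  have phi_nonneg: "phi y \<ge> 0" for y unfolding phi_def by (intro mult_nonneg_nonneg psi_nonneg)
  have cpos: "c i > 0" for i
  proof -
    have cont: "continuous_on {0..h} (\<lambda>y. cosh (real i * (h - y)) * phi y)"
    proof (intro continuous_at_imp_continuous_on ballI)
      fix y
      have a: "isCont (\<lambda>y. psi (y - h/2)) y"
        by (rule isCont_o2[where f="\<lambda>y. y - h/2", OF _ isCont_psi]) (intro continuous_intros)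
      have b: "isCont (\<lambda>y. psi (3*h/4 - y)) y"
        by (rule isCont_o2[where f="\<lambda>y. 3*h/4 - y", OF _ isCont_psi]) (intro continuous_intros)
      show "isCont (\<lambda>y. cosh (real i * (h - y)) * phi y) y"
        unfolding phi_def by (intro continuous_mult a b continuous_intros)
    qed
    have nn: "\<And>y. y \<in> {0..h} \<Longrightarrow> 0 \<le> cosh (real i * (h - y)) * phi y"
      using phi_nonneg by simp
    have "0 \<le> c i" unfolding c_def
      by (rule integral_nonneg[OF integrable_continuous_interval[OF cont] nn])
    moreover have "c i \<noteq> 0"
    proof
      assume "c i = 0"
      then have "\<forall>y\<in>{0..h}. cosh (real i * (h - y)) * phi y = 0"
        using integral_eq_0_iff[OF cont _ nn] assms(1) unfolding c_def by simp
      moreover have "cosh (real i * (h - 5*h/8)) * phi (5*h/8) > 0"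
        using assms(1) unfolding phi_def by (intro mult_pos_pos psi_pos) auto
      ultimately show False using assms(1) by force
    qed
    ultimately show ?thesis by simp
  qed
  have smooth: "smooth2 \<eta>"
    unfolding smooth2_def \<eta>_def
  proof
    fix k
    have g: "smooth1 g" unfolding g_def by (rule smooth1_trig)
    have p1: "smooth1 (\<lambda>y. psi (y - h/2))"
      using smooth1_affine[OF smooth1_psi, of 1 "- (h/2)"] by simp
    have p2: "smooth1 (\<lambda>y. psi (3*h/4 - y))"
      using smooth1_affine[OF smooth1_psi, of "-1" "3*h/4"] by simp
    show "Ck2 k (\<lambda>(x, y). g x * psi (y - h / 2) * psi (3 * h / 4 - y))"
      by (rule Ck2_prod3[OF g p1 p2])
  qed
  have per: "\<eta> (x + 2 * pi, y) = \<eta> (x, y)" for x y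
  proof -
    have "g (x + 2*pi) = g x"
      unfolding g_def by (intro sum.cong refl) (simp add: distrib_left cos_add sin_add s2 c2)
    then show ?thesis unfolding \<eta>_def by simp
  qed
  have supp: "closure {p. \<eta> p \<noteq> 0} \<subseteq> {p. \<delta>0 < snd p \<and> snd p < h}"
  proof -
    have "{p. \<eta> p \<noteq> 0} \<subseteq> {p. h/2 \<le> snd p \<and> snd p \<le> 3*h/4}"
      unfolding \<eta>_def psi_def by (auto split: if_splits)
    moreover have "closed {p::real\<times>real. h/2 \<le> snd p \<and> snd p \<le> 3*h/4}"
      by (intro closed_Collect_conj closed_Collect_le continuous_intros)
    ultimately have "closure {p. \<eta> p \<noteq> 0} \<subseteq> {p. h/2 \<le> snd p \<and> snd p \<le> 3*h/4}"
      by (rule closure_minimal)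
    also have "\<dots> \<subseteq> {p. \<delta>0 < snd p \<and> snd p < h}" using assms(1,4) by auto
    finally show ?thesis .
  qed
  have ints: "ip h (theta_plus A h i) \<eta> = fp i \<and> ip h (theta_minus A h i) \<eta> = fm i"
    if i: "i \<in> {1..N}" for i
  proof -
    have i1: "i \<ge> 1" using i by simp
    have shpos: "sinh (real i * h) > 0" using i1 assms(1) by simp
    define K where "K y = A i * cosh (real i * (h - y)) / sinh (real i * h) * phi y" for y
    have Ic: "((\<lambda>x. cos (real i * x) * g x) has_integral a i * pi) {0..2*pi}"
    proof -
      have "((\<lambda>x. \<Sum>j\<in>{1..N}. a j * (cos (real i * x) * cos (real j * x)) + b j * (cos (real i * x) * sin (real j * x)))
            has_integral (\<Sum>j\<in>{1..N}. a j * (if i = j then pi else 0) + b j * 0)) {0..2*pi}"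
        using i1 by (intro has_integral_sum has_integral_add has_integral_mult_right int_cc int_cs) auto
      moreover have "(\<Sum>j\<in>{1..N}. a j * (if i = j then pi else 0) + b j * 0) = (\<Sum>j\<in>{1..N}. if i = j then a j * pi else 0)"
        by (intro sum.cong) auto
      moreover have "\<dots> = a i * pi" using i by (simp add: sum.delta')
      ultimately show ?thesis
        unfolding g_def by (simp add: sum_distrib_left algebra_simps)
    qed
    have Is: "((\<lambda>x. sin (real i * x) * g x) has_integral b i * pi) {0..2*pi}"
    proof -
      have "((\<lambda>x. \<Sum>j\<in>{1..N}. a j * (cos (real j * x) * sin (real i * x)) + b j * (sin (real i * x) * sin (real j * x)))
            has_integral (\<Sum>j\<in>{1..N}. a j * 0 + b j * (if i = j then pi else 0))) {0..2*pi}"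
        using i1 by (intro has_integral_sum has_integral_add has_integral_mult_right int_ss int_cs) auto
      moreover have "(\<Sum>j\<in>{1..N}. a j * 0 + b j * (if i = j then pi else 0)) = (\<Sum>j\<in>{1..N}. if i = j then b j * pi else 0)"
        by (intro sum.cong) auto
      moreover have "\<dots> = b i * pi" using i by (simp add: sum.delta')
      ultimately show ?thesis
        unfolding g_def by (simp add: sum_distrib_left algebra_simps)
    qed
    have inP: "integral {0..2*pi} (\<lambda>x. theta_plus A h i (x, y) * \<eta> (x, y)) = K y * (a i * pi)" for y
    proof -
      have H: "((\<lambda>x. K y * (cos (real i * x) * g x)) has_integral K y * (a i * pi)) {0..2*pi}"
        by (rule has_integral_mult_right[OF Ic])
      have "(\<lambda>x. theta_plus A h i (x, y) * \<eta> (x, y)) = (\<lambda>x. K y * (cos (real i * x) * g x))"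
        unfolding theta_plus_def \<eta>_def K_def phi_def by (simp add: fun_eq_iff)
      then show ?thesis using integral_unique[OF H] by simp
    qed
    have inM: "integral {0..2*pi} (\<lambda>x. theta_minus A h i (x, y) * \<eta> (x, y)) = K y * (b i * pi)" for y
    proof -
      have H: "((\<lambda>x. K y * (sin (real i * x) * g x)) has_integral K y * (b i * pi)) {0..2*pi}"
        by (rule has_integral_mult_right[OF Is])
      have "(\<lambda>x. theta_minus A h i (x, y) * \<eta> (x, y)) = (\<lambda>x. K y * (sin (real i * x) * g x))"
        unfolding theta_minus_def \<eta>_def K_def phi_def by (simp add: fun_eq_iff)
      then show ?thesis using integral_unique[OF H] by simp
    qed
    have Kint: "integral {0..h} (\<lambda>y. K y * z) = A i / sinh (real i * h) * c i * z" for z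
    proof -
      have "(\<lambda>y. K y * z) = (\<lambda>y. cosh (real i * (h - y)) * phi y * (A i / sinh (real i * h) * z))"
        unfolding K_def by (simp add: fun_eq_iff)
      then show ?thesis unfolding c_def by simp
    qed
    have Ai: "A i \<noteq> 0" using assms(5) i by blast
    have cne: "c i \<noteq> 0" using cpos[of i] by simp
    have sne: "sinh (real i * h) \<noteq> 0" using shpos by linarith
    show ?thesis
      unfolding ip_def inP inM Kint a_def b_def
      using cancel_lem[OF Ai sne cne] by simp
  qed
  have per': "\<forall>x y. \<eta> (x + 2 * pi, y) = \<eta> (x, y)" using per by blast
  have ints': "\<forall>i\<in>{1..N}. ip h (theta_plus A h i) \<eta> = fp i \<and> ip h (theta_minus A h i) \<eta> = fm i"
    using ints by blast
  show ?thesis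
    by (intro exI[of _ \<eta>] conjI smooth per' supp ints')
qed

end
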